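(* Let $G=(V,E,\omega)\in\mathcal G$, $\gamma\geq0$, $\tau>0$, and $M\geq0$. Let $J_\tau(u):=\langle\chi_V-u,e^{-\tau L}u\rangle_{\mathcal V}$, $v^0\in\mathcal V^{ab}_M$, and let $\{v^k\}_{k=1}^N\subset\mathcal V^{ab}_M$ ($N\in\mathbb N\cup\{\infty\}$) be a sequence generated by the mcOKMBO scheme. Then for all $k\in\{1,\dots,N\}$, $v^k\in\operatorname{argmin}_{v\in\mathcal K_M}dJ^{v^{k-1}}_\tau(v)$, where $dJ^u_\tau(v):=\langle\chi_V-2e^{-\tau L}u,v\rangle_{\mathcal V}$. Moreover, for all $k\in\{1,\dots,N\}$, $J_\tau(v^k)\leq J_\tau(v^{k-1})$ with equality if and only if $v^k=v^{k-1}$. Finally, there is $K\geq0$ such that $v^k=v^K$ for all $k\geq K$.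
   Context: $\mathcal{G}$ is the set of finite, simple, connected, undirected, edge-weighted graphs $G=(V,E,\omega)$ with $V=\{1,\dots,n\}$, $n\geq2$, weights $\omega_{ij}=\omega_{ji}>0$ on edges, $0$ otherwise. $d_i=\sum_j\omega_{ij}$. $\mathcal V$: functions $V\to\mathbb R$. Fixed $r\in[0,1]$: $\langle u,v\rangle_{\mathcal V}=\sum_id_i^ru_iv_i$, $(\Delta u)_i=d_i^{-r}\sum_j\omega_{ij}(u_i-u_j)$, $\mathcal M(u)=\sum_id_i^ru_i$, $\mathcal A(u)=\frac{\mathcal M(u)}{\sum_id_i^r}\chi_V$ ($\chi_S$ indicator of $S$). For $u\in\mathcal V$ let $\varphi$ be the unique solution of $\Delta\varphi=u-\mathcal A(u)$, $\mathcal M(\varphi)=0$, and $Lu:=\Delta u+\gamma\varphi$; $e^{-\tau L}$ its exponential. $\mathcal K_M$: $[0,1]$-valued $u\in\mathcal V$ with $\mathcal M(u)=M$. $\mathcal V^{ab}_M$: the set of $u\in\mathcal K_M$ for which there is $i\in V$ with $u_j\in\{0,1\}$ for all $j\neq i$. mcOKMBO scheme: for $k=1,\dots,N$, let $u=e^{-\tau L}v^{k-1}$ (the time-$\tau$ solution of $du/dt=-Lu$, $u(0)=v^{k-1}$); choose a bijection $R:V\to\{1,\dots,n\}$ such that $R(i)<R(j)$ implies $u_i\geq u_j$ (ties broken arbitrarily), and write $\ell_p:=R^{-1}(p)$; let $i^*$ be the largest index with $\sum_{p=1}^{i^*}d_{\ell_p}^r\leq M$; define $v^k_{\ell_p}=1$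 for $p\leq i^*$, $v^k_{\ell_{i^*+1}}=d_{\ell_{i^*+1}}^{-r}\big(M-\sum_{p=1}^{i^*}d_{\ell_p}^r\big)$, and $v^k_{\ell_p}=0$ for $p\geq i^*+2$. *)

theory Defs
  imports "HOL-Analysis.Analysis" "HOL-Library.Extended_Nat"
begin

text \<open>Vertex set V is a finite type 'v (playing the role of {1..n}); functions on V are real^'v.
  Weights w :: 'v => 'v => real.\<close>

definition wgraph :: "('v::finite \<Rightarrow> 'v \<Rightarrow> real) \<Rightarrow> bool" where
  "wgraph w \<longleftrightarrow> CARD('v) \<ge> 2 \<and> (\<forall>i j. w i j = w j i) \<and> (\<forall>i j. 0 \<le> w i j)
     \<and> (\<forall>i. w i i = 0) \<and> (\<forall>i j. (i, j) \<in> {(a, b). 0 < w a b}\<^sup>*)"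

definition deg :: "('v::finite \<Rightarrow> 'v \<Rightarrow> real) \<Rightarrow> 'v \<Rightarrow> real" where
  "deg w i = (\<Sum>j\<in>UNIV. w i j)"

definition innerV :: "('v::finite \<Rightarrow> 'v \<Rightarrow> real) \<Rightarrow> real \<Rightarrow> real^'v \<Rightarrow> real^'v \<Rightarrow> real" where
  "innerV w r u v = (\<Sum>i\<in>UNIV. deg w i powr r * u$i * v$i)"

definition lap :: "('v::finite \<Rightarrow> 'v \<Rightarrow> real) \<Rightarrow> real \<Rightarrow> real^'v \<Rightarrow> real^'v" where
  "lap w r u = (\<chi> i. deg w i powr (-r) * (\<Sum>j\<in>UNIV. w i j * (u$i - u$j)))"

definition mass :: "('v::finite \<Rightarrow> 'v \<Rightarrow> real) \<Rightarrow> real \<Rightarrow> real^'v \<Rightarrow> real" where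
  "mass w r u = (\<Sum>i\<in>UNIV. deg w i powr r * u$i)"

definition avg :: "('v::finite \<Rightarrow> 'v \<Rightarrow> real) \<Rightarrow> real \<Rightarrow> real^'v \<Rightarrow> real^'v" where
  "avg w r u = (\<chi> i. mass w r u / (\<Sum>j\<in>UNIV. deg w j powr r))"

definition phi :: "('v::finite \<Rightarrow> 'v \<Rightarrow> real) \<Rightarrow> real \<Rightarrow> real^'v \<Rightarrow> real^'v" where
  "phi w r u = (THE \<phi>. lap w r \<phi> = u - avg w r u \<and> mass w r \<phi> = 0)"

definition Lop :: "('v::finite \<Rightarrow> 'v \<Rightarrow> real) \<Rightarrow> real \<Rightarrow> real \<Rightarrow> real^'v \<Rightarrow> real^'v" where
  "Lop w r \<gamma> u = lap w r u + \<gamma> *\<^sub>R phi w r u"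

definition expL :: "('v::finite \<Rightarrow> 'v \<Rightarrow> real) \<Rightarrow> real \<Rightarrow> real \<Rightarrow> real \<Rightarrow> real^'v \<Rightarrow> real^'v" where
  "expL w r \<gamma> \<tau> u = (\<Sum>k. ((- \<tau>) ^ k / fact k) *\<^sub>R ((Lop w r \<gamma> ^^ k) u))"

definition KM :: "('v::finite \<Rightarrow> 'v \<Rightarrow> real) \<Rightarrow> real \<Rightarrow> real \<Rightarrow> (real^'v) set" where
  "KM w r M = {u. (\<forall>i. 0 \<le> u$i \<and> u$i \<le> 1) \<and> mass w r u = M}"

definition VabM :: "('v::finite \<Rightarrow> 'v \<Rightarrow> real) \<Rightarrow> real \<Rightarrow> real \<Rightarrow> (real^'v) set" where
  "VabM w r M = {u \<in> KM w r M. \<exists>i. \<forall>j. j \<noteq> i \<longrightarrow> u$j = 0 \<or> u$j = 1}"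

definition Jtau :: "('v::finite \<Rightarrow> 'v \<Rightarrow> real) \<Rightarrow> real \<Rightarrow> real \<Rightarrow> real \<Rightarrow> real^'v \<Rightarrow> real" where
  "Jtau w r \<gamma> \<tau> u = innerV w r (1 - u) (expL w r \<gamma> \<tau> u)"

definition dJ :: "('v::finite \<Rightarrow> 'v \<Rightarrow> real) \<Rightarrow> real \<Rightarrow> real \<Rightarrow> real \<Rightarrow> real^'v \<Rightarrow> real^'v \<Rightarrow> real" where
  "dJ w r \<gamma> \<tau> u v = innerV w r (1 - 2 *\<^sub>R expL w r \<gamma> \<tau> u) v"

text \<open>One mcOKMBO step from vold to vnew (ties broken arbitrarily: any admissible ranking R).\<close>
definition mcstep :: "('v::finite \<Rightarrow> 'v \<Rightarrow> real) \<Rightarrow> real \<Rightarrow> real \<Rightarrow> real \<Rightarrow> real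
     \<Rightarrow> real^'v \<Rightarrow> real^'v \<Rightarrow> bool" where
  "mcstep w r \<gamma> \<tau> M vold vnew \<longleftrightarrow>
    (let u = expL w r \<gamma> \<tau> vold; n = CARD('v) in
     \<exists>R :: 'v \<Rightarrow> nat. bij_betw R UNIV {1..n} \<and> (\<forall>i j. R i < R j \<longrightarrow> u$i \<ge> u$j) \<and>
       (let l = inv_into UNIV R;
            istar = (GREATEST i. i \<le> n \<and> (\<Sum>p=1..i. deg w (l p) powr r) \<le> M) in
        \<forall>p\<in>{1..n}. vnew $ (l p) =
           (if p \<le> istar then 1
            else if p = istar + 1 then deg w (l p) powr (-r) * (M - (\<Sum>q=1..istar. deg w (l q) powr r))
            else 0)))"

end

theory Submission
  imports Defs
begin

lemma deg_pos:
  assumes "wgraph w" shows "0 < deg w i"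
proof -
  have c2: "CARD('a) \<ge> 2" and nn: "\<And>i j. 0 \<le> w i j" and rt: "\<And>i j. (i,j) \<in> {(a, b). 0 < w a b}\<^sup>*"
    using assms unfolding wgraph_def by auto
  obtain j :: 'a where "j \<noteq> i"
  proof -
    have "\<not> (UNIV::'a set) \<subseteq> {i}"
    proof
      assume "(UNIV::'a set) \<subseteq> {i}"
      then have "card (UNIV::'a set) \<le> card {i}" by (intro card_mono) auto
      with c2 show False by simp
    qed
    then show ?thesis using that by blast
  qed
  with rt[of i j] obtain k where "0 < w i k"
    by (metis (no_types, lifting) case_prodD converse_rtranclE mem_Collect_eq)
  moreover have "w i k \<le> deg w i" unfolding deg_def
    by (rule member_le_sum) (auto simp: nn)
  ultimately show ?thesis by simp
qed

lemma dpow_pos: assumes "wgraph w" shows "0 < deg w i powr r"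
  using deg_pos[OF assms, of i] by simp

lemma dpow_inv: "wgraph w \<Longrightarrow> deg w i powr r * deg w i powr (-r) = 1"
  using deg_pos[of w i] by (simp add: powr_add[symmetric])

lemma Spos: assumes "wgraph w" shows "0 < (\<Sum>j\<in>UNIV. deg w j powr r)"
  by (rule sum_pos[OF finite UNIV_not_empty dpow_pos[OF assms]])

lemma innerV_comm: "innerV w r x y = innerV w r y x"
  unfolding innerV_def by (simp add: ac_simps)

lemma linear_innerV: "linear (innerV w r x)"
  by (rule linearI) (simp_all add: innerV_def sum.distrib sum_distrib_left algebra_simps)

lemma innerV_add_right: "innerV w r x (a + b) = innerV w r x a + innerV w r x b"
  by (simp add: innerV_def sum.distrib algebra_simps)
lemma innerV_diff_right: "innerV w r x (a - b) = innerV w r x a - innerV w r x b"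
  by (simp add: innerV_def sum_subtractf algebra_simps)
lemma innerV_scale_right: "innerV w r x (c *\<^sub>R b) = c * innerV w r x b"
  by (simp add: innerV_def sum_distrib_left algebra_simps)
lemma innerV_add_left: "innerV w r (a + b) x = innerV w r a x + innerV w r b x"
  by (simp add: innerV_def sum.distrib algebra_simps)
lemma innerV_diff_left: "innerV w r (a - b) x = innerV w r a x - innerV w r b x"
  by (simp add: innerV_def sum_subtractf algebra_simps)
lemma innerV_scale_left: "innerV w r (c *\<^sub>R b) x = c * innerV w r b x"
  by (simp add: innerV_def sum_distrib_left algebra_simps)
lemma innerV_zero_right[simp]: "innerV w r x 0 = 0"
  by (simp add: innerV_def)
lemma innerV_zero_left[simp]: "innerV w r 0 x = 0"
  by (simp add: innerV_def)

lemma mass_innerV: "mass w r u = innerV w r 1 u"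
  by (simp add: mass_def innerV_def)

lemma innerV_self_pos:
  assumes "wgraph w" "x \<noteq> 0" shows "0 < innerV w r x x"
proof -
  obtain i where "x$i \<noteq> 0" using assms(2) by (auto simp: vec_eq_iff)
  have "0 < x$i * x$i" using \<open>x$i \<noteq> 0\<close> by (auto simp: zero_less_mult_iff linorder_neq_iff)
  then have "0 < deg w i powr r * x$i * x$i" using dpow_pos[OF assms(1), of i r]
    by (simp add: mult.assoc)
  also have "\<dots> \<le> innerV w r x x" unfolding innerV_def
    by (rule member_le_sum) (auto simp: mult.assoc intro!: mult_nonneg_nonneg less_imp_le[OF dpow_pos[OF assms(1)]])
  finally show ?thesis .
qed

lemma innerV_self_nonneg: "wgraph w \<Longrightarrow> 0 \<le> innerV w r x x"
  unfolding innerV_def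
  by (rule sum_nonneg) (auto simp: mult.assoc intro!: mult_nonneg_nonneg less_imp_le[OF dpow_pos])

lemma innerV_lap:
  assumes "wgraph w"
  shows "innerV w r x (lap w r y) = (\<Sum>i\<in>UNIV. \<Sum>j\<in>UNIV. w i j * (y$i - y$j) * x$i)"
proof -
  have "innerV w r x (lap w r y) = (\<Sum>i\<in>UNIV. (deg w i powr r * deg w i powr (-r)) * (x$i * (\<Sum>j\<in>UNIV. w i j * (y$i - y$j))))"
    unfolding innerV_def lap_def by (simp add: ac_simps)
  also have "\<dots> = (\<Sum>i\<in>UNIV. \<Sum>j\<in>UNIV. w i j * (y$i - y$j) * x$i)"
    by (simp add: dpow_inv[OF assms] sum_distrib_left ac_simps)
  finally show ?thesis .
qed

lemma wsym: "wgraph w \<Longrightarrow> w i j = w j i"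
  unfolding wgraph_def by auto

lemma lap_selfadj:
  assumes "wgraph w"
  shows "innerV w r x (lap w r y) = innerV w r y (lap w r x)"
proof -
  have sw: "(\<Sum>i\<in>UNIV. \<Sum>j\<in>UNIV. w i j * y$j * x$i) = (\<Sum>i\<in>UNIV. \<Sum>j\<in>UNIV. w i j * x$j * y$i)"
    by (subst sum.swap) (simp add: wsym[OF assms] ac_simps)
  show ?thesis unfolding innerV_lap[OF assms]
    using sw by (simp add: algebra_simps sum_subtractf)
qed

lemma linear_lap: "linear (lap w r)"
proof (rule linearI)
  fix a b :: "real^'a"
  have "\<And>i. (\<Sum>j\<in>UNIV. w i j * ((a+b)$i - (a+b)$j)) = (\<Sum>j\<in>UNIV. w i j * (a$i - a$j)) + (\<Sum>j\<in>UNIV. w i j * (b$i - b$j))"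
    by (simp add: sum.distrib[symmetric] algebra_simps)
  then show "lap w r (a + b) = lap w r a + lap w r b"
    by (simp add: lap_def vec_eq_iff distrib_left)
next
  fix c and a :: "real^'a"
  have "\<And>i. (\<Sum>j\<in>UNIV. w i j * ((c *\<^sub>R a)$i - (c *\<^sub>R a)$j)) = c * (\<Sum>j\<in>UNIV. w i j * (a$i - a$j))"
    by (simp add: sum_distrib_left algebra_simps)
  then show "lap w r (c *\<^sub>R a) = c *\<^sub>R lap w r a"
    by (simp add: lap_def vec_eq_iff)
qed

lemma linear_mass: "linear (mass w r)"
  by (rule linearI) (simp_all add: mass_def sum.distrib sum_distrib_left algebra_simps)

lemma linear_avg: "linear (avg w r)"
  by (rule linearI) (simp_all add: avg_def vec_eq_iff linear_add[OF linear_mass] linear_scale[OF linear_mass] add_divide_distrib)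

lemma lap_one: "lap w r 1 = 0"
  by (simp add: lap_def vec_eq_iff)

lemma mass_lap: assumes "wgraph w" shows "mass w r (lap w r y) = 0"
  using lap_selfadj[OF assms, of r 1 y] by (simp add: mass_innerV lap_one)

lemma mass_avg: assumes "wgraph w" shows "mass w r (avg w r u) = mass w r u"
proof -
  define m where "m = mass w r u"
  define S where "S = (\<Sum>j\<in>UNIV. deg w j powr r)"
  have c: "\<And>i. avg w r u $ i = m / S" by (simp add: avg_def m_def S_def)
  have "mass w r (avg w r u) = (\<Sum>i\<in>UNIV. deg w i powr r * (m / S))" by (simp only: mass_def c)
  also have "\<dots> = S * (m / S)" unfolding S_def by (rule sum_distrib_right[symmetric])
  also have "\<dots> = m" using Spos[OF assms, of r] by (simp add: S_def)
  finally show ?thesis by (simp add: m_def)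
qed

lemma avg_one: assumes "wgraph w" shows "avg w r 1 = 1"
  using Spos[OF assms, of r] by (simp add: mass_def avg_def vec_eq_iff)

lemma avg_zero_iff: assumes "wgraph w" shows "avg w r u = 0 \<longleftrightarrow> mass w r u = 0"
  using Spos[OF assms, of r] by (auto simp: avg_def vec_eq_iff)

lemma lap_zero_const:
  assumes g: "wgraph w" and z: "lap w r y = 0"
  shows "y$i = y$j"
proof -
  have "innerV w r y (lap w r y) = 0" using z by simp
  then have Q: "(\<Sum>i\<in>UNIV. \<Sum>j\<in>UNIV. w i j * (y$i - y$j) * y$i) = 0" by (simp add: innerV_lap[OF g])
  have sw: "(\<Sum>i\<in>UNIV. \<Sum>j\<in>UNIV. w i j * (y$i - y$j) * y$i) = (\<Sum>i\<in>UNIV. \<Sum>j\<in>UNIV. w i j * (y$j - y$i) * y$j)"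
    by (subst sum.swap) (simp add: wsym[OF g])
  have "(\<Sum>i\<in>UNIV. \<Sum>j\<in>UNIV. w i j * (y$i - y$j)^2) =
     (\<Sum>i\<in>UNIV. \<Sum>j\<in>UNIV. w i j * (y$i - y$j) * y$i) + (\<Sum>i\<in>UNIV. \<Sum>j\<in>UNIV. w i j * (y$j - y$i) * y$j)"
    by (simp add: sum.distrib[symmetric] power2_eq_square algebra_simps)
  also have "\<dots> = 0" using Q sw by simp
  finally have S0: "(\<Sum>i\<in>UNIV. \<Sum>j\<in>UNIV. w i j * (y$i - y$j)^2) = 0" .
  have nn: "\<And>i j. 0 \<le> w i j" using g unfolding wgraph_def by auto
  have "\<forall>i j. w i j * (y$i - y$j)^2 = 0"
  proof (intro allI)
    fix a b
    have "\<forall>i\<in>UNIV. (\<Sum>j\<in>UNIV. w i j * (y$i - y$j)^2) = 0"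
      using S0 by (subst (asm) sum_nonneg_eq_0_iff) (auto intro!: sum_nonneg simp: nn)
    then have "(\<Sum>j\<in>UNIV. w a j * (y$a - y$j)^2) = 0" by blast
    then show "w a b * (y$a - y$b)^2 = 0"
      by (subst (asm) sum_nonneg_eq_0_iff) (auto simp: nn)
  qed
  then have edge: "\<And>a b. 0 < w a b \<Longrightarrow> y$a = y$b" by (metis less_irrefl mult_eq_0_iff power_eq_0_iff right_minus_eq)
  have "(i,j) \<in> {(a, b). 0 < w a b}\<^sup>*" using g unfolding wgraph_def by auto
  then show ?thesis
    by (induction rule: rtrancl_induct) (auto dest: edge)
qed

lemma T_zero:
  assumes g: "wgraph w" and z: "lap w r x + avg w r x = 0"
  shows "x = 0"
proof -
  have "mass w r (lap w r x + avg w r x) = 0" using z by (simp add: linear_0[OF linear_mass])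
  then have mz: "mass w r x = 0" by (simp add: linear_add[OF linear_mass] mass_lap[OF g] mass_avg[OF g])
  then have "avg w r x = 0" using avg_zero_iff[OF g] by simp
  with z have lz: "lap w r x = 0" by simp
  show ?thesis
  proof (subst vec_eq_iff, intro allI)
    fix i
    have "mass w r x = (\<Sum>j\<in>UNIV. deg w j powr r * x$i)"
      unfolding mass_def by (intro sum.cong refl) (metis lap_zero_const[OF g lz])
    also have "\<dots> = (\<Sum>j\<in>UNIV. deg w j powr r) * x$i" by (simp add: sum_distrib_right)
    finally show "x$i = 0$i" using mz Spos[OF g, of r] by simp
  qed
qed

lemma phi_ex1:
  assumes g: "wgraph w"
  shows "\<exists>!p. lap w r p = u - avg w r u \<and> mass w r p = 0"
proof -
  let ?T = "\<lambda>x. lap w r x + avg w r x"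
  have lin: "linear ?T" by (intro linear_compose_add linear_lap linear_avg)
  have "inj ?T"
  proof (rule injI)
    fix x y assume "?T x = ?T y"
    then have "?T (x - y) = 0" by (simp add: linear_diff[OF lin])
    then show "x = y" using T_zero[OF g, of r "x - y"] by simp
  qed
  then have "surj ?T" by (rule linear_injective_imp_surjective[OF lin _ refl])
  then obtain p where p0: "u - avg w r u = ?T p" using surjD[of ?T "u - avg w r u"] by blast
  then have p: "?T p = u - avg w r u" by simp
  have "mass w r (?T p) = mass w r (u - avg w r u)" using p by simp
  then have mp: "mass w r p = 0"
    by (simp add: linear_add[OF linear_mass] linear_diff[OF linear_mass] mass_lap[OF g] mass_avg[OF g])
  then have "avg w r p = 0" using avg_zero_iff[OF g] by simp
  with p mp have ex: "lap w r p = u - avg w r u \<and> mass w r p = 0" by simp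
  show ?thesis
  proof (rule ex1I[of _ p])
    show "lap w r p = u - avg w r u \<and> mass w r p = 0" by (rule ex)
  next
    fix q assume q: "lap w r q = u - avg w r u \<and> mass w r q = 0"
    have "mass w r (q - p) = 0" using q mp by (simp add: linear_diff[OF linear_mass])
    then have "avg w r (q - p) = 0" using avg_zero_iff[OF g] by simp
    moreover have "lap w r (q - p) = 0" using q ex by (simp add: linear_diff[OF linear_lap])
    ultimately have "q - p = 0" using T_zero[OF g, of r "q - p"] by simp
    then show "q = p" by simp
  qed
qed

lemma phi_spec:
  assumes g: "wgraph w"
  shows "lap w r (phi w r u) = u - avg w r u \<and> mass w r (phi w r u) = 0"
  unfolding phi_def by (rule theI'[OF phi_ex1[OF g]])

lemma phi_unique:
  assumes g: "wgraph w" and "lap w r p = u - avg w r u" and "mass w r p = 0"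
  shows "phi w r u = p"
  unfolding phi_def using assms phi_ex1[OF g] by (intro the1_equality) auto

lemma linear_phi:
  assumes g: "wgraph w" shows "linear (phi w r)"
proof (rule linearI)
  fix a b
  show "phi w r (a + b) = phi w r a + phi w r b"
    using phi_spec[OF g, of r a] phi_spec[OF g, of r b]
    by (intro phi_unique[OF g]) (simp_all add: linear_add[OF linear_lap] linear_add[OF linear_avg] linear_add[OF linear_mass])
next
  fix c a
  show "phi w r (c *\<^sub>R a) = c *\<^sub>R phi w r a"
    using phi_spec[OF g, of r a]
    by (intro phi_unique[OF g]) (simp_all add: linear_scale[OF linear_lap] linear_scale[OF linear_avg] linear_scale[OF linear_mass] scaleR_diff_right)
qed

lemma innerV_avg: "innerV w r x (avg w r y) = mass w r x * (mass w r y / (\<Sum>j\<in>UNIV. deg w j powr r))"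
  by (simp add: innerV_def avg_def mass_def sum_distrib_right sum_divide_distrib)

lemma phi_selfadj:
  assumes g: "wgraph w"
  shows "innerV w r (phi w r u) v = innerV w r u (phi w r v)"
proof -
  let ?p = "phi w r u" and ?q = "phi w r v"
  have v: "v = lap w r ?q + avg w r v" using phi_spec[OF g, of r v] by simp
  have "innerV w r ?p v = innerV w r ?p (lap w r ?q) + innerV w r ?p (avg w r v)"
    by (subst v) (simp add: innerV_add_right)
  also have "innerV w r ?p (avg w r v) = 0" using phi_spec[OF g, of r u] by (simp add: innerV_avg)
  also have "innerV w r ?p (lap w r ?q) = innerV w r ?q (lap w r ?p)" by (rule lap_selfadj[OF g])
  also have "\<dots> = innerV w r ?q u - innerV w r ?q (avg w r u)" using phi_spec[OF g, of r u] by (simp add: innerV_diff_right)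
  also have "innerV w r ?q (avg w r u) = 0" using phi_spec[OF g, of r v] by (simp add: innerV_avg)
  finally show ?thesis by (simp add: innerV_comm)
qed

lemma linear_Lop:
  assumes g: "wgraph w" shows "linear (Lop w r \<gamma>)"
proof -
  have "linear (\<lambda>x. \<gamma> *\<^sub>R phi w r x)"
    by (rule linearI) (simp_all add: linear_add[OF linear_phi[OF g]] linear_scale[OF linear_phi[OF g]] scaleR_add_right)
  then have "linear (\<lambda>x. lap w r x + \<gamma> *\<^sub>R phi w r x)" by (intro linear_compose_add linear_lap)
  then show ?thesis unfolding Lop_def[abs_def] .
qed

lemma Lop_selfadj:
  assumes g: "wgraph w"
  shows "innerV w r (Lop w r \<gamma> x) y = innerV w r x (Lop w r \<gamma> y)"
proof -
  have "innerV w r (lap w r x) y = innerV w r x (lap w r y)"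
    using lap_selfadj[OF g, of r x y] innerV_comm[of w r "lap w r x" y] by simp
  then show ?thesis
    unfolding Lop_def innerV_add_left innerV_add_right innerV_scale_left innerV_scale_right
    using phi_selfadj[OF g, of r x y] by simp
qed

lemma Lop_one:
  assumes g: "wgraph w" shows "Lop w r \<gamma> 1 = 0"
proof -
  have "phi w r 1 = 0" by (rule phi_unique[OF g]) (simp_all add: avg_one[OF g] linear_0[OF linear_lap] mass_def)
  then show ?thesis by (simp add: Lop_def lap_one)
qed

lemma linear_Lpow:
  assumes g: "wgraph w" shows "linear (Lop w r \<gamma> ^^ k)"
proof (induction k)
  case 0 show ?case by (rule linearI) simp_all
next
  case (Suc k) show ?case unfolding funpow.simps(2) by (rule linear_compose[OF Suc.IH linear_Lop[OF g]])
qed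

lemma Lpow_bound:
  assumes g: "wgraph w"
  obtains C where "C > 0" "\<And>k z. norm ((Lop w r \<gamma> ^^ k) z) \<le> C ^ k * norm z"
proof -
  obtain C where C: "C > 0" "\<And>z. norm (Lop w r \<gamma> z) \<le> C * norm z"
    using linear_bounded_pos[OF linear_Lop[OF g]] by blast
  have "norm ((Lop w r \<gamma> ^^ k) z) \<le> C ^ k * norm z" for k z
  proof (induction k)
    case 0 then show ?case by simp
  next
    case (Suc k)
    have "norm ((Lop w r \<gamma> ^^ Suc k) z) = norm (Lop w r \<gamma> ((Lop w r \<gamma> ^^ k) z))" by simp
    also have "\<dots> \<le> C * norm ((Lop w r \<gamma> ^^ k) z)" by (rule C(2))
    also have "\<dots> \<le> C * (C ^ k * norm z)" using Suc C(1) by (intro mult_left_mono) auto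
    finally show ?case by (simp add: mult.assoc)
  qed
  then show ?thesis using that C(1) by blast
qed

lemma exp_terms_summable:
  assumes g: "wgraph w"
  shows "summable (\<lambda>k. norm (((-t)^k / fact k) *\<^sub>R (Lop w r \<gamma> ^^ k) u))"
    and "summable (\<lambda>k. norm ((-t)^k / fact k * ((Lop w r \<gamma> ^^ k) u)$m))"
proof -
  obtain C where C: "C > 0" "\<And>k z. norm ((Lop w r \<gamma> ^^ k) z) \<le> C ^ k * norm z"
    using Lpow_bound[OF g] by blast
  let ?g = "\<lambda>k. norm u * (inverse (fact k) * (\<bar>t\<bar> * C) ^ k)"
  have sg: "summable ?g" by (intro summable_mult summable_exp)
  have bnd: "\<bar>(-t)^k / fact k\<bar> * norm ((Lop w r \<gamma> ^^ k) u) \<le> ?g k" for k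
  proof -
    have "\<bar>(-t)^k / fact k\<bar> * norm ((Lop w r \<gamma> ^^ k) u) \<le> \<bar>(-t)^k / fact k\<bar> * (C ^ k * norm u)"
      by (intro mult_left_mono C(2)) auto
    also have "\<dots> = ?g k" by (simp add: power_abs power_mult_distrib divide_inverse abs_mult)
    finally show ?thesis .
  qed
  show "summable (\<lambda>k. norm (((-t)^k / fact k) *\<^sub>R (Lop w r \<gamma> ^^ k) u))"
    by (rule summable_comparison_test'[OF sg, of 0]) (use bnd in simp)
  show "summable (\<lambda>k. norm ((-t)^k / fact k * ((Lop w r \<gamma> ^^ k) u)$m))"
  proof (rule summable_comparison_test'[OF sg, of 0])
    fix k
    have "norm (norm ((-t)^k / fact k * ((Lop w r \<gamma> ^^ k) u)$m)) = \<bar>(-t)^k / fact k\<bar> * \<bar>((Lop w r \<gamma> ^^ k) u)$m\<bar>"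
      by (simp add: abs_mult)
    also have "\<dots> \<le> \<bar>(-t)^k / fact k\<bar> * norm ((Lop w r \<gamma> ^^ k) u)"
      by (intro mult_left_mono component_le_norm_cart) auto
    also have "\<dots> \<le> ?g k" by (rule bnd)
    finally show "norm (norm ((-t)^k / fact k * ((Lop w r \<gamma> ^^ k) u)$m)) \<le> ?g k" .
  qed
qed

lemma expL_sums:
  assumes g: "wgraph w"
  shows "(\<lambda>k. ((-t)^k / fact k) *\<^sub>R (Lop w r \<gamma> ^^ k) u) sums expL w r \<gamma> t u"
  unfolding expL_def using summable_norm_cancel[OF exp_terms_summable(1)[OF g]] by (rule summable_sums)

lemma expL_nth_sums:
  assumes g: "wgraph w"
  shows "(\<lambda>k. (-t)^k / fact k * ((Lop w r \<gamma> ^^ k) u)$m) sums (expL w r \<gamma> t u)$m"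
  using bounded_linear.sums[OF bounded_linear_vec_nth[of m] expL_sums[OF g]] by simp

lemma innerV_expL_sums:
  assumes g: "wgraph w"
  shows "(\<lambda>k. (-t)^k / fact k * innerV w r y ((Lop w r \<gamma> ^^ k) u)) sums innerV w r y (expL w r \<gamma> t u)"
proof -
  have bl: "bounded_linear (innerV w r y)" using linear_innerV linear_conv_bounded_linear by blast
  show ?thesis using bounded_linear.sums[OF bl expL_sums[OF g]]
    by (simp add: linear_scale[OF linear_innerV])
qed

lemma Lpow_selfadj:
  assumes g: "wgraph w"
  shows "innerV w r ((Lop w r \<gamma> ^^ i) y) ((Lop w r \<gamma> ^^ j) x) = innerV w r y ((Lop w r \<gamma> ^^ (i + j)) x)"
proof (induction i arbitrary: j)
  case 0 then show ?case by simp
next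
  case (Suc i)
  have "innerV w r ((Lop w r \<gamma> ^^ Suc i) y) ((Lop w r \<gamma> ^^ j) x)
      = innerV w r ((Lop w r \<gamma> ^^ i) y) (Lop w r \<gamma> ((Lop w r \<gamma> ^^ j) x))"
    by (simp add: Lop_selfadj[OF g])
  also have "\<dots> = innerV w r ((Lop w r \<gamma> ^^ i) y) ((Lop w r \<gamma> ^^ Suc j) x)" by simp
  also have "\<dots> = innerV w r y ((Lop w r \<gamma> ^^ (i + Suc j)) x)" by (rule Suc.IH)
  finally show ?case by simp
qed

lemma coef_binom:
  fixes s t :: real shows "(\<Sum>i\<le>n. (-s)^i / fact i * ((-t)^(n-i) / fact (n-i))) = (-(s+t))^n / fact n"
proof -
  have "(-s + -t :: real)^n /\<^sub>R fact n = (\<Sum>i\<le>n. ((-s)^i /\<^sub>R fact i) * ((-t)^(n-i) /\<^sub>R fact (n-i)))"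
    by (rule exp_series_add_commuting) simp
  then show ?thesis by (simp add: divide_inverse mult_ac)
qed

lemma expL_prod:
  assumes g: "wgraph w"
  shows "innerV w r (expL w r \<gamma> s y) (expL w r \<gamma> t x) = innerV w r y (expL w r \<gamma> (s + t) x)"
proof -
  let ?L = "Lop w r \<gamma>"
  define a where "a = (\<lambda>m k. (-s)^k / fact k * ((?L ^^ k) y)$m)"
  define b where "b = (\<lambda>m k. (-t)^k / fact k * ((?L ^^ k) x)$m)"
  have ca: "(\<lambda>n. \<Sum>i\<le>n. a m i * b m (n - i)) sums ((expL w r \<gamma> s y)$m * (expL w r \<gamma> t x)$m)" for m
  proof -
    have "(\<lambda>n. \<Sum>i\<le>n. a m i * b m (n - i)) sums ((\<Sum>k. a m k) * (\<Sum>k. b m k))"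
      unfolding a_def b_def by (intro Cauchy_product_sums exp_terms_summable(2)[OF g])
    moreover have "(\<Sum>k. a m k) = (expL w r \<gamma> s y)$m"
      unfolding a_def by (rule sums_unique[OF expL_nth_sums[OF g], symmetric])
    moreover have "(\<Sum>k. b m k) = (expL w r \<gamma> t x)$m"
      unfolding b_def by (rule sums_unique[OF expL_nth_sums[OF g], symmetric])
    ultimately show ?thesis by simp
  qed
  have s1: "(\<lambda>n. \<Sum>m\<in>UNIV. deg w m powr r * (\<Sum>i\<le>n. a m i * b m (n - i))) sums
      innerV w r (expL w r \<gamma> s y) (expL w r \<gamma> t x)"
    unfolding innerV_def mult.assoc by (intro sums_sum sums_mult ca)
  have tm: "(\<Sum>m\<in>UNIV. deg w m powr r * (\<Sum>i\<le>n. a m i * b m (n - i)))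
      = (-(s+t))^n / fact n * innerV w r y ((?L ^^ n) x)" for n
  proof -
    have "(\<Sum>m\<in>UNIV. deg w m powr r * (\<Sum>i\<le>n. a m i * b m (n - i)))
        = (\<Sum>i\<le>n. ((-s)^i / fact i * ((-t)^(n-i) / fact (n-i))) * innerV w r ((?L ^^ i) y) ((?L ^^ (n-i)) x))"
      unfolding a_def b_def innerV_def
      by (simp add: sum_distrib_left sum_distrib_right ac_simps) (rule sum.swap)
    also have "\<dots> = (\<Sum>i\<le>n. ((-s)^i / fact i * ((-t)^(n-i) / fact (n-i))) * innerV w r y ((?L ^^ n) x))"
      by (intro sum.cong refl) (simp add: Lpow_selfadj[OF g])
    also have "\<dots> = (-(s+t))^n / fact n * innerV w r y ((?L ^^ n) x)"
      unfolding sum_distrib_right[symmetric] coef_binom ..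
    finally show ?thesis .
  qed
  have s2: "(\<lambda>n. \<Sum>m\<in>UNIV. deg w m powr r * (\<Sum>i\<le>n. a m i * b m (n - i))) sums innerV w r y (expL w r \<gamma> (s + t) x)"
    unfolding tm using innerV_expL_sums[OF g, where t="s + t" and y=y and u=x and \<gamma>=\<gamma> and r=r] by simp
  show ?thesis using sums_unique2[OF s1 s2] .
qed

lemma expL_zero:
  assumes g: "wgraph w" shows "expL w r \<gamma> 0 u = u"
proof -
  have "(\<lambda>k. ((-0::real)^k / fact k) *\<^sub>R (Lop w r \<gamma> ^^ k) u) = (\<lambda>k. if k = 0 then u else 0)"
    by (rule ext) auto
  moreover have "(\<lambda>k. if k = 0 then u else 0) sums u" using sums_single[of 0 "\<lambda>_. u"] by simp
  ultimately show ?thesis using sums_unique2[OF expL_sums[OF g, of 0 r \<gamma> u]] by simp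
qed

lemma Lpow_one:
  assumes g: "wgraph w" shows "(Lop w r \<gamma> ^^ Suc k) 1 = 0"
proof (induction k)
  case 0 then show ?case by (simp add: Lop_one[OF g])
next
  case (Suc k)
  have "(Lop w r \<gamma> ^^ Suc (Suc k)) 1 = Lop w r \<gamma> ((Lop w r \<gamma> ^^ Suc k) 1)" by simp
  also have "\<dots> = 0" using Suc by (simp add: linear_0[OF linear_Lop[OF g]])
  finally show ?case .
qed

lemma expL_one:
  assumes g: "wgraph w" shows "expL w r \<gamma> t 1 = 1"
proof -
  have "(\<lambda>k. ((-t)^k / fact k) *\<^sub>R (Lop w r \<gamma> ^^ k) 1) = (\<lambda>k. if k = 0 then 1 else 0)"
  proof (rule ext)
    fix k show "((-t)^k / fact k) *\<^sub>R (Lop w r \<gamma> ^^ k) 1 = (if k = 0 then 1 else 0)"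
      using Lpow_one[OF g, where r=r and \<gamma>=\<gamma> and k="k - 1"] by (cases k) simp_all
  qed
  moreover have "(\<lambda>k. if k = 0 then (1::real^'a) else 0) sums 1" using sums_single[of 0 "\<lambda>_. (1::real^'a)"] by simp
  ultimately show ?thesis using sums_unique2[OF expL_sums[OF g, of t r \<gamma> 1]] by simp
qed

lemma expL_diff:
  assumes g: "wgraph w" shows "expL w r \<gamma> t (a - b) = expL w r \<gamma> t a - expL w r \<gamma> t b"
proof -
  have "(\<lambda>k. ((-t)^k / fact k) *\<^sub>R (Lop w r \<gamma> ^^ k) a - ((-t)^k / fact k) *\<^sub>R (Lop w r \<gamma> ^^ k) b)
      sums (expL w r \<gamma> t a - expL w r \<gamma> t b)"
    by (intro sums_diff expL_sums[OF g])
  then have "(\<lambda>k. ((-t)^k / fact k) *\<^sub>R (Lop w r \<gamma> ^^ k) (a - b)) sums (expL w r \<gamma> t a - expL w r \<gamma> t b)"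
    by (simp add: linear_diff[OF linear_Lpow[OF g]] scaleR_diff_right)
  then show ?thesis using sums_unique2[OF expL_sums[OF g]] by blast
qed

lemma expL_selfadj:
  assumes g: "wgraph w" shows "innerV w r (expL w r \<gamma> t y) x = innerV w r y (expL w r \<gamma> t x)"
  using expL_prod[OF g, of r \<gamma> t y 0 x] by (simp add: expL_zero[OF g])

lemma expL_pos:
  assumes g: "wgraph w" and x: "x \<noteq> 0" shows "0 < innerV w r x (expL w r \<gamma> t x)"
proof -
  let ?F = "expL w r \<gamma> (t/2) x"
  have eq: "innerV w r ?F ?F = innerV w r x (expL w r \<gamma> t x)"
    using expL_prod[OF g, of r \<gamma> "t/2" x "t/2" x] by simp
  have "?F \<noteq> 0"
  proof
    assume F0: "?F = 0"
    have "innerV w r x x = innerV w r x (expL w r \<gamma> (-(t/2) + t/2) x)" by (simp add: expL_zero[OF g])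
    also have "\<dots> = innerV w r (expL w r \<gamma> (-(t/2)) x) ?F" by (rule expL_prod[OF g, symmetric])
    also have "\<dots> = 0" using F0 by simp
    finally show False using innerV_self_pos[OF g x, of r] by simp
  qed
  then show ?thesis using innerV_self_pos[OF g, of ?F r] eq by simp
qed

lemma J_diff:
  assumes g: "wgraph w"
  shows "Jtau w r \<gamma> \<tau> v - Jtau w r \<gamma> \<tau> u =
    (dJ w r \<gamma> \<tau> u v - dJ w r \<gamma> \<tau> u u) - innerV w r (v - u) (expL w r \<gamma> \<tau> (v - u))"
proof -
  let ?E = "expL w r \<gamma> \<tau>"
  have f1: "innerV w r 1 (?E z) = innerV w r 1 z" for z
    using expL_selfadj[OF g, of r \<gamma> \<tau> 1 z] by (simp add: expL_one[OF g])
  have f2: "innerV w r v (?E u) = innerV w r u (?E v)"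
    using expL_selfadj[OF g, of r \<gamma> \<tau> v u] innerV_comm[of w r "?E v" u] by simp
  have f3: "innerV w r (?E u) v = innerV w r u (?E v)"
    using expL_selfadj[OF g, of r \<gamma> \<tau> u v] by simp
  have f4: "innerV w r (?E u) u = innerV w r u (?E u)"
    using innerV_comm by blast
  show ?thesis
    unfolding Jtau_def dJ_def expL_diff[OF g] innerV_diff_left innerV_diff_right innerV_scale_left f1
    using f2 f3 f4 by simp
qed

lemma greedy_min:
  assumes g: "wgraph w" and st: "mcstep w r \<gamma> \<tau> M vold vnew"
    and mv: "mass w r vnew = M" and u: "u \<in> KM w r M"
  shows "dJ w r \<gamma> \<tau> vold vnew \<le> dJ w r \<gamma> \<tau> vold u"
proof -
  define e where "e = expL w r \<gamma> \<tau> vold"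
  define n where "n = CARD('a)"
  from st obtain R :: "'a \<Rightarrow> nat" where bij: "bij_betw R UNIV {1..n}"
      and ord: "\<forall>i j. R i < R j \<longrightarrow> e$i \<ge> e$j"
      and F: "\<forall>p\<in>{1..n}. vnew $ (inv_into UNIV R p) =
           (if p \<le> (GREATEST i. i \<le> n \<and> (\<Sum>p=1..i. deg w (inv_into UNIV R p) powr r) \<le> M) then 1
            else if p = (GREATEST i. i \<le> n \<and> (\<Sum>p=1..i. deg w (inv_into UNIV R p) powr r) \<le> M) + 1
              then deg w (inv_into UNIV R p) powr (-r) * (M - (\<Sum>q=1..(GREATEST i. i \<le> n \<and> (\<Sum>p=1..i. deg w (inv_into UNIV R p) powr r) \<le> M). deg w (inv_into UNIV R q) powr r))
            else 0)"
    unfolding mcstep_def Let_def e_def n_def by blast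
  define l where "l = inv_into UNIV R"
  define ist where "ist = (GREATEST i. i \<le> n \<and> (\<Sum>p=1..i. deg w (l p) powr r) \<le> M)"
  have f1: "\<And>p. p \<in> {1..n} \<Longrightarrow> p \<le> ist \<Longrightarrow> vnew $ (l p) = 1"
    using F unfolding l_def ist_def by auto
  have f3: "\<And>p. p \<in> {1..n} \<Longrightarrow> ist + 1 < p \<Longrightarrow> vnew $ (l p) = 0"
    using F unfolding l_def ist_def by auto
  have inj: "inj R" using bij bij_betw_imp_inj_on by blast
  have Rr: "R i \<in> {1..n}" for i using bij bij_betwE by blast
  have lR: "l (R i) = i" for i unfolding l_def by (rule inv_into_f_f[OF inj]) simp
  have Rl: "q \<in> {1..n} \<Longrightarrow> R (l q) = q" for q
    unfolding l_def using bij_betw_imp_surj_on[OF bij] by (metis f_inv_into_f)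
  define c where "c = (\<lambda>i. 1 - 2 * e$i)"
  have dJe: "dJ w r \<gamma> \<tau> vold x = (\<Sum>i\<in>UNIV. deg w i powr r * c i * x$i)" for x
    unfolding dJ_def innerV_def c_def e_def by simp
  obtain \<theta> where th: "\<And>i. (c i - \<theta>) * (vnew$i - u$i) \<le> 0"
  proof (cases "ist < n")
    case True
    define j0 where "j0 = l (ist + 1)"
    have Rj0: "R j0 = ist + 1" unfolding j0_def using True by (intro Rl) auto
    have "(c i - c j0) * (vnew$i - u$i) \<le> 0" for i
    proof -
      have p: "R i \<in> {1..n}" by (rule Rr)
      have ui: "0 \<le> u$i" "u$i \<le> 1" using u by (auto simp: KM_def)
      consider "R i \<le> ist" | "R i = ist + 1" | "ist + 1 < R i" by linarith
      then show ?thesis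
      proof cases
        case 1
        then have "vnew$i = 1" using f1[OF p] by (simp add: lR)
        moreover have "e$i \<ge> e$j0" using ord 1 Rj0 by auto
        ultimately show ?thesis using ui by (intro mult_nonpos_nonneg) (auto simp: c_def)
      next
        case 2
        then have "i = j0" using Rj0 inj by (metis injD)
        then show ?thesis by simp
      next
        case 3
        then have "vnew$i = 0" using f3[OF p] by (simp add: lR)
        moreover have "e$j0 \<ge> e$i" using ord 3 Rj0 by auto
        ultimately show ?thesis using ui by (intro mult_nonneg_nonpos) (auto simp: c_def)
      qed
    qed
    then show ?thesis by (rule that)
  next
    case False
    have "(c i - Max (range c)) * (vnew$i - u$i) \<le> 0" for i
    proof -
      have "vnew$i = 1" using f1[OF Rr] False Rr[of i] by (simp add: lR)
      moreover have "u$i \<le> 1" using u by (auto simp: KM_def)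
      moreover have "c i \<le> Max (range c)" by (rule Max_ge) auto
      ultimately show ?thesis by (intro mult_nonpos_nonneg) auto
    qed
    then show ?thesis by (rule that)
  qed
  have "(\<Sum>i\<in>UNIV. deg w i powr r * ((c i - \<theta>) * (vnew$i - u$i))) \<le> 0"
    by (intro sum_nonpos mult_nonneg_nonpos th less_imp_le[OF dpow_pos[OF g]])
  moreover have "(\<Sum>i\<in>UNIV. deg w i powr r * ((c i - \<theta>) * (vnew$i - u$i))) =
      (\<Sum>i\<in>UNIV. deg w i powr r * c i * vnew$i) - (\<Sum>i\<in>UNIV. deg w i powr r * c i * u$i)
       - \<theta> * mass w r vnew + \<theta> * mass w r u"
    unfolding mass_def by (simp add: sum_subtractf sum.distrib sum_distrib_left algebra_simps)
  moreover have "mass w r u = M" using u by (simp add: KM_def)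
  ultimately show ?thesis unfolding dJe using mv by simp
qed

lemma VabM_finite:
  assumes g: "wgraph w" shows "finite (VabM w r M)"
proof -
  define b where "b = (\<lambda>(f::'a \<Rightarrow> bool) j. if f j then (1::real) else 0)"
  define G where "G = (\<lambda>(i::'a, f::'a \<Rightarrow> bool). (\<chi> j. if j = i then
        (M - (\<Sum>j\<in>UNIV - {i}. deg w j powr r * b f j)) / deg w i powr r else b f j) :: real^'a)"
  have "VabM w r M \<subseteq> range G"
  proof
    fix u assume uV: "u \<in> VabM w r M"
    then obtain i where i: "\<forall>j. j \<noteq> i \<longrightarrow> u$j = 0 \<or> u$j = 1" and m: "mass w r u = M"
      by (auto simp: VabM_def KM_def)
    define f where "f = (\<lambda>j. u$j = 1)"
    have bj: "j \<noteq> i \<Longrightarrow> b f j = u$j" for j using i by (auto simp: b_def f_def)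
    have "M = deg w i powr r * u$i + (\<Sum>j\<in>UNIV - {i}. deg w j powr r * u$j)"
      using m unfolding mass_def by (simp add: sum.remove[of UNIV i])
    moreover have "(\<Sum>j\<in>UNIV - {i}. deg w j powr r * u$j) = (\<Sum>j\<in>UNIV - {i}. deg w j powr r * b f j)"
      by (intro sum.cong) (auto simp: bj)
    ultimately have "u$i = (M - (\<Sum>j\<in>UNIV - {i}. deg w j powr r * b f j)) / deg w i powr r"
      using dpow_pos[OF g, of i r] by (simp add: field_simps)
    then have "u = G (i, f)" unfolding G_def by (auto simp: vec_eq_iff bj)
    then show "u \<in> range G" by blast
  qed
  then show ?thesis by (rule finite_subset) simp
qed

theorem lemma5p30:
  fixes w :: "'v::finite \<Rightarrow> 'v \<Rightarrow> real" and r \<gamma> \<tau> M :: real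
    and v :: "nat \<Rightarrow> real^'v" and N :: enat
  assumes "wgraph w" and "0 \<le> r" and "r \<le> 1" and "0 \<le> \<gamma>" and "0 < \<tau>" and "0 \<le> M"
    and "v 0 \<in> VabM w r M"
    and "\<And>k. 1 \<le> k \<Longrightarrow> enat k \<le> N \<Longrightarrow> v k \<in> VabM w r M"
    and "\<And>k. 1 \<le> k \<Longrightarrow> enat k \<le> N \<Longrightarrow> mcstep w r \<gamma> \<tau> M (v (k - 1)) (v k)"
  shows "(\<forall>k. 1 \<le> k \<and> enat k \<le> N \<longrightarrow>
            v k \<in> KM w r M \<and> (\<forall>u \<in> KM w r M. dJ w r \<gamma> \<tau> (v (k - 1)) (v k) \<le> dJ w r \<gamma> \<tau> (v (k - 1)) u))
       \<and> (\<forall>k. 1 \<le> k \<and> enat k \<le> N \<longrightarrow>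
            Jtau w r \<gamma> \<tau> (v k) \<le> Jtau w r \<gamma> \<tau> (v (k - 1)) \<and>
            (Jtau w r \<gamma> \<tau> (v k) = Jtau w r \<gamma> \<tau> (v (k - 1)) \<longleftrightarrow> v k = v (k - 1)))
       \<and> (\<exists>K::nat. enat K \<le> N \<and> (\<forall>k. K \<le> k \<and> enat k \<le> N \<longrightarrow> v k = v K))"
proof -
  note g = assms(1)
  let ?J = "Jtau w r \<gamma> \<tau>"
  have V: "enat k \<le> N \<Longrightarrow> v k \<in> VabM w r M" for k
    using assms(7,8) by (cases "k = 0") auto
  have KMk: "enat k \<le> N \<Longrightarrow> v k \<in> KM w r M" for k
    using V[of k] by (simp add: VabM_def)
  have KMprev: "enat k \<le> N \<Longrightarrow> v (k - 1) \<in> KM w r M" for k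
    by (rule KMk) (meson diff_le_self enat_ord_simps(1) order_trans)
  have P1: "1 \<le> k \<Longrightarrow> enat k \<le> N \<Longrightarrow> v k \<in> KM w r M \<and>
      (\<forall>u \<in> KM w r M. dJ w r \<gamma> \<tau> (v (k - 1)) (v k) \<le> dJ w r \<gamma> \<tau> (v (k - 1)) u)" for k
  proof -
    assume k: "1 \<le> k" "enat k \<le> N"
    have "mass w r (v k) = M" using KMk[OF k(2)] by (simp add: KM_def)
    then show ?thesis using KMk[OF k(2)] greedy_min[OF g assms(9)[OF k]] by blast
  qed
  have P2: "1 \<le> k \<Longrightarrow> enat k \<le> N \<Longrightarrow> ?J (v k) \<le> ?J (v (k - 1)) \<and>
            (?J (v k) = ?J (v (k - 1)) \<longleftrightarrow> v k = v (k - 1))" for k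
  proof -
    assume k: "1 \<le> k" "enat k \<le> N"
    let ?D = "v k - v (k - 1)"
    have d: "?J (v k) - ?J (v (k - 1)) = (dJ w r \<gamma> \<tau> (v (k - 1)) (v k) - dJ w r \<gamma> \<tau> (v (k - 1)) (v (k - 1)))
        - innerV w r ?D (expL w r \<gamma> \<tau> ?D)" by (rule J_diff[OF g])
    have le: "dJ w r \<gamma> \<tau> (v (k - 1)) (v k) \<le> dJ w r \<gamma> \<tau> (v (k - 1)) (v (k - 1))"
      using P1[OF k] KMprev[OF k(2)] by blast
    show ?thesis
    proof (cases "v k = v (k - 1)")
      case True then show ?thesis by simp
    next
      case False
      then have "?D \<noteq> 0" by simp
      then have "0 < innerV w r ?D (expL w r \<gamma> \<tau> ?D)" by (rule expL_pos[OF g])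
      then have "?J (v k) < ?J (v (k - 1))" using d le by linarith
      then show ?thesis using False by simp
    qed
  qed
  have P3: "\<exists>K::nat. enat K \<le> N \<and> (\<forall>k. K \<le> k \<and> enat k \<le> N \<longrightarrow> v k = v K)"
  proof (cases N)
    case (enat n)
    show ?thesis by (rule exI[of _ n]) (auto simp: enat)
  next
    case infinity
    have stp: "?J (v (Suc k)) \<le> ?J (v k)" for k using P2[of "Suc k"] infinity by simp
    have mono: "j \<le> k \<Longrightarrow> ?J (v k) \<le> ?J (v j)" for j k
    proof (induction k rule: dec_induct)
      case base then show ?case by simp
    next
      case (step k) then show ?case using stp[of k] by linarith
    qed
    have "range (\<lambda>k. ?J (v k)) \<subseteq> ?J ` VabM w r M" using V infinity by auto
    then have fin: "finite (range (\<lambda>k. ?J (v k)))" using VabM_finite[OF g] finite_subset by blast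
    obtain K where K: "?J (v K) = Min (range (\<lambda>k. ?J (v k)))"
      using Min_in[OF fin] by auto
    have "K \<le> k \<Longrightarrow> v k = v K" for k
    proof (induction k rule: dec_induct)
      case base then show ?case by simp
    next
      case (step k)
      have "?J (v (Suc k)) \<ge> ?J (v K)" unfolding K using fin by (intro Min_le) auto
      moreover have "?J (v (Suc k)) \<le> ?J (v k)" by (rule stp)
      ultimately have "?J (v (Suc k)) = ?J (v (Suc k - 1))" using step.IH by simp
      then have "v (Suc k) = v (Suc k - 1)" using P2[of "Suc k"] infinity by simp
      then show ?case using step.IH by simp
    qed
    then show ?thesis using infinity by auto
  qed
  show ?thesis using P1 P2 P3 by blast
qed

end
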